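(* Let $C:=-2.15$ and let $g:\mathbb{R}\to\mathbb{R}$ be $$g(z):=\exp\big(z^3+(-2-3C)z^2+(3C^2+4C)z+\ln 2\big)-1 .$$ For $W=[w_1,w_2,w_3]$ with $w_1,w_2,w_3\in\mathbb{R}^3$, define $f(\cdot;W):\mathbb{R}^3\to\mathbb{R}^3$ by $f(x;W):=[g(\langle w_1,x\rangle),g(\langle w_2,x\rangle),g(\langle w_3,x\rangle)]^\top$. Then there exists such a $W$ for which $f(\cdot;W)$ has two distinct fixed points $p_1,p_2\in\mathbb{R}^3$ such that for each $i\in\{1,2\}$ there exist constants $\epsilon_i>0$, $c_i>0$ and $K_i\in[0,1)$ with the following property: for every initial point $x^{(0)}\in[p_{i,1}-\epsilon_i,p_{i,1}+\epsilon_i]\times\{1\}\times\{1\}$, the fixed-point iteration $x^{(t)}=f(x^{(t-1)};W)$ ($t\ge1$) converges to $p_i$, and for every $t\ge2$, $$\|x^{(t)}-p_i\|_\infty\le K_i^t\cdot c_i\epsilon_i .$$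
   Context: $p_{i,1}$ denotes the first coordinate of $p_i$; $\|\cdot\|_\infty$ is the $\ell_\infty$ norm. A fixed point of $F$ is a point $p$ with $F(p)=p$. *)

theory Defs
  imports "HOL-Analysis.Analysis"
begin

definition Cc :: real where "Cc = -2.15"

definition g :: "real \<Rightarrow> real" where
  "g z = exp (z^3 + (-2 - 3*Cc)*z^2 + (3*Cc^2 + 4*Cc)*z + ln 2) - 1"

definition fW :: "real^3^3 \<Rightarrow> real^3 \<Rightarrow> real^3" where
  "fW W x = (\<chi> i. g (W $ i \<bullet> x))"

definition linf :: "real^3 \<Rightarrow> real" where
  "linf x = Max {\<bar>x $ i\<bar> | i. True}"

end

theory Submission
  imports Defs
begin

definition hh :: "real \<Rightarrow> real" where
  "hh u = u^3 + (-2 - 3*Cc)*u^2 + (3*Cc^2 + 4*Cc)*u + ln 2"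

definition hder :: "real \<Rightarrow> real" where
  "hder u = 3*u^2 + 2*(-2 - 3*Cc)*u + (3*Cc^2 + 4*Cc)"

definition mm :: real where "mm = -49/60"

lemma g_hh: "g u = exp (hh u) - 1"
  by (simp add: g_def hh_def)

lemma g0: "g 0 = 1"
  by (simp add: g_def)

lemma hder_C: "hder Cc = 0" by (simp add: hder_def Cc_def power2_eq_square)
lemma hder_m: "hder mm = 0" by (simp add: hder_def Cc_def mm_def power2_eq_square)

lemma g_strict: "g mm < g Cc"
proof -
  have "hh mm < hh Cc" by (simp add: hh_def Cc_def mm_def power3_eq_cube power2_eq_square)
  then show ?thesis by (simp add: g_hh)
qed

lemma deriv_phi:
  "((\<lambda>y. g (al*y+be)) has_real_derivative (al * (exp (hh (al*y+be)) * hder (al*y+be)))) (at y)"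
proof -
  have "((\<lambda>y. exp (hh (al*y+be)) - 1) has_real_derivative
     (exp (hh (al*y+be)) * (3*(al*y+be)^2*al + (-2 - 3*Cc)*(2*(al*y+be)*al) + (3*Cc^2 + 4*Cc)*al))) (at y)"
    unfolding hh_def
    by (auto intro!: derivative_eq_intros simp: power2_eq_square)
  moreover have "exp (hh (al*y+be)) * (3*(al*y+be)^2*al + (-2 - 3*Cc)*(2*(al*y+be)*al) + (3*Cc^2 + 4*Cc)*al)
     = al * (exp (hh (al*y+be)) * hder (al*y+be))"
    by (simp add: hder_def algebra_simps power2_eq_square)
  ultimately have "((\<lambda>y. exp (hh (al*y+be)) - 1) has_real_derivative (al * (exp (hh (al*y+be)) * hder (al*y+be)))) (at y)"
    by (simp only:)
  moreover have "(\<lambda>y. g (al*y+be)) = (\<lambda>y. exp (hh (al*y+be)) - 1)" by (simp add: g_hh)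
  ultimately show ?thesis by simp
qed

lemma contract:
  fixes al be z :: real
  assumes fz: "g (al*z+be) = z" and hz: "hder (al*z+be) = 0"
  defines "phi \<equiv> (\<lambda>y. g (al*y+be))"
  shows "\<exists>e>0. \<forall>a. \<bar>a - z\<bar> \<le> e \<longrightarrow> (\<forall>t. \<bar>(phi^^t) a - z\<bar> \<le> (1/2)^t * e)"
proof -
  define d where "d = (\<lambda>y. al * (exp (hh (al*y+be)) * hder (al*y+be)))"
  have der: "\<And>y. (phi has_real_derivative d y) (at y)"
    unfolding phi_def d_def by (rule deriv_phi)
  have "isCont d z" unfolding d_def hh_def hder_def by (intro continuous_intros)
  moreover have "d z = 0" using hz by (simp add: d_def)
  ultimately have "\<exists>del>0. \<forall>y. \<bar>y - z\<bar> < del \<longrightarrow> \<bar>d y\<bar> < 1/2"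
  proof -
    assume c: "isCont d z" and d0: "d z = 0"
    obtain s where s: "s > 0" "\<And>x. x \<noteq> z \<and> norm (x - z) < s \<longrightarrow> norm (d x - d z) < 1/2"
      using LIM_D[OF c[unfolded isCont_def], of "1/2"] by auto
    have "\<bar>d y\<bar> < 1/2" if "\<bar>y - z\<bar> < s" for y
      using s(2)[of y] d0 that by (cases "y = z") auto
    then show ?thesis using s(1) by blast
  qed
  then obtain del where del: "del > 0" "\<And>y. \<bar>y - z\<bar> < del \<Longrightarrow> \<bar>d y\<bar> < 1/2"
    by blast
  define e where "e = del/2"
  have e: "e > 0" using del by (simp add: e_def)
  have dle: "\<bar>d y\<bar> \<le> 1/2" if "\<bar>y - z\<bar> \<le> e" for y
    using del(2)[of y] that del(1) by (simp add: e_def)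
  have pz: "phi z = z" using fz by (simp add: phi_def)
  have step: "\<bar>phi y - z\<bar> \<le> 1/2 * \<bar>y - z\<bar>" if "\<bar>y - z\<bar> \<le> e" for y
  proof (cases y z rule: linorder_cases)
    case less
    obtain w where w: "y < w" "w < z" "phi z - phi y = (z - y) * d w"
      using MVT2[OF less der] by blast
    have dw: "\<bar>d w\<bar> \<le> 1/2" using w that by (intro dle) auto
    have "\<bar>(z - y) * d w\<bar> \<le> \<bar>z - y\<bar> * (1/2)"
      using mult_left_mono[OF dw, of "\<bar>z - y\<bar>"] by (simp add: abs_mult)
    then show ?thesis using w pz by (simp add: abs_minus_commute)
  next
    case equal then show ?thesis using pz by simp
  next
    case greater
    obtain w where w: "z < w" "w < y" "phi y - phi z = (y - z) * d w"
      using MVT2[OF greater der] by blast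
    have dw: "\<bar>d w\<bar> \<le> 1/2" using w that by (intro dle) auto
    have "\<bar>(y - z) * d w\<bar> \<le> \<bar>y - z\<bar> * (1/2)"
      using mult_left_mono[OF dw, of "\<bar>y - z\<bar>"] by (simp add: abs_mult)
    then show ?thesis using w pz by simp
  qed
  have "\<bar>(phi^^t) a - z\<bar> \<le> (1/2)^t * e" if a: "\<bar>a - z\<bar> \<le> e" for a t
  proof (induction t)
    case 0 then show ?case using a by simp
  next
    case (Suc t)
    have "(1/2::real)^t * e \<le> e" using e by (simp add: mult_left_le_one_le power_le_one)
    then have "\<bar>(phi^^Suc t) a - z\<bar> \<le> 1/2 * \<bar>(phi^^t) a - z\<bar>"
      using Suc step by simp
    also have "\<dots> \<le> 1/2 * ((1/2)^t * e)" using Suc by simp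
    finally show ?case by simp
  qed
  then show ?thesis using e by blast
qed


definition pv :: "real \<Rightarrow> real^3" where
  "pv y = (\<chi> j. if j = 1 then y else 1)"

definition al :: real where "al = (Cc - mm) / (g Cc - g mm)"
definition be :: real where "be = Cc - al * g Cc"

definition WW :: "real^3^3" where
  "WW = (\<chi> i. if i = 1 then (\<chi> j. if j = 1 then al else if j = 3 then be else 0) else 0)"

lemma fix1: "al * g Cc + be = Cc" by (simp add: be_def)
lemma fix2: "al * g mm + be = mm"
proof -
  have "g Cc - g mm \<noteq> 0" using g_strict by simp
  then have "al * (g mm - g Cc) = mm - Cc" by (simp add: al_def field_simps)
  then show ?thesis by (simp add: be_def algebra_simps)
qed

lemma fW_step: "fW WW (pv y) = pv (g (al*y+be))"
proof -
  have "WW $ 1 \<bullet> pv y = al*y + be"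
    by (simp add: WW_def pv_def inner_vec_def sum_3)
  moreover have "WW $ i \<bullet> pv y = 0" if "i \<noteq> 1" for i using that by (simp add: WW_def)
  ultimately show ?thesis
    by (auto simp: fW_def pv_def vec_eq_iff g0)
qed

lemma fW_iter: "(fW WW ^^ t) (pv a) = pv (((\<lambda>y. g (al*y+be)) ^^ t) a)"
  by (induction t) (simp_all add: fW_step)

lemma linf_pv: assumes "\<bar>y - z\<bar> \<le> B" "0 \<le> B" shows "linf (pv y - pv z) \<le> B"
proof -
  define S where "S = {\<bar>(pv y - pv z) $ i\<bar> | i. True}"
  have "S = (\<lambda>i. \<bar>(pv y - pv z) $ i\<bar>) ` UNIV" by (auto simp: S_def)
  also have "\<dots> \<subseteq> {\<bar>y - z\<bar>, 0}" by (auto simp: pv_def)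
  finally have sub: "S \<subseteq> {\<bar>y - z\<bar>, 0}" .
  have fin: "finite S" using sub finite_subset by blast
  have ne: "S \<noteq> {}" by (auto simp: S_def)
  have all: "\<forall>x\<in>S. x \<le> B" using sub assms by blast
  have "Max S \<le> B" using Max_le_iff[OF fin ne] all by blast
  then show ?thesis by (simp add: linf_def S_def)
qed

lemma pv_tendsto: assumes "f \<longlonglongrightarrow> z" shows "(\<lambda>t. pv (f t)) \<longlonglongrightarrow> pv z"
proof -
  have eq: "pv y = y *\<^sub>R axis 1 1 + (\<chi> j. if j = 1 then 0 else 1)" for y
    by (simp add: pv_def vec_eq_iff axis_def)
  show ?thesis unfolding eq by (intro tendsto_intros assms)
qed

lemma good:
  assumes fz: "g (al*z+be) = z" and hz: "hder (al*z+be) = 0"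
  shows "\<exists>\<epsilon> c K :: real. \<epsilon> > 0 \<and> c > 0 \<and> 0 \<le> K \<and> K < 1 \<and>
      (\<forall>a. pv z $ 1 - \<epsilon> \<le> a \<and> a \<le> pv z $ 1 + \<epsilon> \<longrightarrow>
        (let x0 = (\<chi> j. if j = 1 then a else 1) :: real^3 in
         (\<lambda>t. (fW WW ^^ t) x0) \<longlonglongrightarrow> pv z \<and>
         (\<forall>t\<ge>2. linf ((fW WW ^^ t) x0 - pv z) \<le> K ^ t * c * \<epsilon>)))"
proof -
  obtain e where e: "e > 0" and
    b: "\<And>a t. \<bar>a - z\<bar> \<le> e \<Longrightarrow> \<bar>(((\<lambda>y. g (al*y+be)) ^^ t) a) - z\<bar> \<le> (1/2)^t * e"
    using contract[OF fz hz] by blast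
  have "(\<lambda>t. (fW WW ^^ t) (pv a)) \<longlonglongrightarrow> pv z \<and>
         (\<forall>t\<ge>2. linf ((fW WW ^^ t) (pv a) - pv z) \<le> (1/2::real) ^ t * 1 * e)"
    if a: "\<bar>a - z\<bar> \<le> e" for a
  proof
    let ?s = "\<lambda>t. ((\<lambda>y. g (al*y+be)) ^^ t) a"
    have "(\<lambda>t. (1/2::real)^t * e) \<longlonglongrightarrow> 0"
      by (intro tendsto_mult_left_zero LIMSEQ_power_zero) simp
    then have "(\<lambda>t. ?s t - z) \<longlonglongrightarrow> 0"
      by (rule Lim_null_comparison[rotated]) (use b[OF a] in simp)
    then have "?s \<longlonglongrightarrow> z" by (simp add: LIM_zero_iff)
    then show "(\<lambda>t. (fW WW ^^ t) (pv a)) \<longlonglongrightarrow> pv z"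
      unfolding fW_iter by (rule pv_tendsto)
    show "\<forall>t\<ge>2. linf ((fW WW ^^ t) (pv a) - pv z) \<le> (1/2::real) ^ t * 1 * e"
      using b[OF a] e unfolding fW_iter by (auto intro!: linf_pv)
  qed
  moreover have "pv z $ 1 = z" by (simp add: pv_def)
  ultimately have "\<forall>a. pv z $ 1 - e \<le> a \<and> a \<le> pv z $ 1 + e \<longrightarrow>
        (let x0 = (\<chi> j. if j = 1 then a else 1) :: real^3 in
         (\<lambda>t. (fW WW ^^ t) x0) \<longlonglongrightarrow> pv z \<and>
         (\<forall>t\<ge>2. linf ((fW WW ^^ t) x0 - pv z) \<le> (1/2::real) ^ t * 1 * e))"
    unfolding Let_def pv_def[symmetric] by (auto simp: abs_le_iff)
  then show ?thesis using e
    apply (rule_tac exI[of _ e])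
    apply (rule_tac exI[of _ "1::real"])
    apply (rule_tac exI[of _ "1/2::real"])
    by simp
qed

theorem lemmaC4:
  shows "\<exists>W :: real^3^3. \<exists>p1 p2 :: real^3.
    p1 \<noteq> p2 \<and> fW W p1 = p1 \<and> fW W p2 = p2 \<and>
    (\<forall>p \<in> {p1, p2}. \<exists>\<epsilon> c K :: real. \<epsilon> > 0 \<and> c > 0 \<and> 0 \<le> K \<and> K < 1 \<and>
      (\<forall>a. p $ 1 - \<epsilon> \<le> a \<and> a \<le> p $ 1 + \<epsilon> \<longrightarrow>
        (let x0 = (\<chi> j. if j = 1 then a else 1) :: real^3 in
         (\<lambda>t. (fW W ^^ t) x0) \<longlonglongrightarrow> p \<and>
         (\<forall>t\<ge>2. linf ((fW W ^^ t) x0 - p) \<le> K ^ t * c * \<epsilon>))))"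
proof -
  have f1: "g (al * g Cc + be) = g Cc" and h1: "hder (al * g Cc + be) = 0"
    using fix1 hder_C by simp_all
  have f2: "g (al * g mm + be) = g mm" and h2: "hder (al * g mm + be) = 0"
    using fix2 hder_m by simp_all
  have ne: "pv (g Cc) \<noteq> pv (g mm)"
    using g_strict by (auto simp: pv_def vec_eq_iff)
  have fp1: "fW WW (pv (g Cc)) = pv (g Cc)" using f1 by (simp add: fW_step)
  have fp2: "fW WW (pv (g mm)) = pv (g mm)" using f2 by (simp add: fW_step)
  show ?thesis
    apply (rule exI[of _ WW], rule exI[of _ "pv (g Cc)"], rule exI[of _ "pv (g mm)"])
    apply (intro conjI ne fp1 fp2 ballI)
    apply (erule insertE)
     apply hypsubst
     apply (rule good[OF f1 h1])
    apply (drule singletonD)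
    apply hypsubst
    apply (rule good[OF f2 h2])
    done
qed

end
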